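(* For $\epsilon>0$ sufficiently small (depending on $A_1,A_2$), for every $t\in[0,1]$ the curve $C_t=p_t^{-1}(0)\subset\mathbb{CP}^2$, where $$p_t(x)=\gamma_{\epsilon,t}\Big(\frac{r_1^2}{\eta_1^2}\Big)x_1+\gamma_{\epsilon,t}\Big(\frac{r_2^2}{\eta_2^2}\Big)x_2+\gamma_{\epsilon,t}\Big(\frac1{\eta_0^2}\Big),$$ is a symplectic curve for $\omega_{FS}$. Thus $\{C_t\}_{t\in[0,1]}$ is a symplectic isotopy from the line $\{x_1+x_2+1=0\}$ to $C_1=\{\gamma_\epsilon(r_1^2/\eta_1^2)x_1+\gamma_\epsilon(r_2^2/\eta_2^2)x_2+\gamma_\epsilon(1/\eta_0^2)=0\}$.
   Context: On $\mathbb{CP}^2$, affine coordinates $x_k=z_k/z_0=r_ke^{i\theta_k}$, $\omega_{FS}=i\partial\bar\partial\log(1+|x_1|^2+|x_2|^2)$. $\eta_1=\max(1,r_2)$, $\eta_2=\max(1,r_1)$, $\eta_0=\max(r_1,r_2)$. Fix constants $1<A_1<A_2$; $\gamma_\epsilon:[0,\infty)\to[0,1]$ is smooth, non-decreasing, with $\gamma_\epsilon(u)=0$ for $\sqrt u\le A_1\epsilon$ and $\gamma_\epsilon(u)=1$ for $\sqrt u\ge A_2\epsilon$; $\gamma_{\epsilon,t}=t\gamma_\epsilon+(1-t)$. (The curves are understood as the closures in $\mathbb{CP}^2$ of the zero sets, defined symmetrically in the three affine charts.) *)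

theory Defs
  imports "HOL-Analysis.Analysis"
begin

text \<open>Admissible cutoff functions gamma_eps (extended by 0 to negative reals,
  which is harmless since gamma_eps vanishes near 0).\<close>
definition cutoff :: "real \<Rightarrow> real \<Rightarrow> real \<Rightarrow> (real \<Rightarrow> real) \<Rightarrow> bool" where
  "cutoff A1 A2 \<epsilon> \<gamma> \<longleftrightarrow>
     (\<forall>n u. ((deriv ^^ n) \<gamma> has_real_derivative (deriv ^^ Suc n) \<gamma> u) (at u)) \<and>
     (\<forall>u\<ge>0. 0 \<le> \<gamma> u \<and> \<gamma> u \<le> 1) \<and>
     (\<forall>u v. 0 \<le> u \<longrightarrow> u \<le> v \<longrightarrow> \<gamma> u \<le> \<gamma> v) \<and>
     (\<forall>u\<ge>0. sqrt u \<le> A1 * \<epsilon> \<longrightarrow> \<gamma> u = 0) \<and>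
     (\<forall>u\<ge>0. A2 * \<epsilon> \<le> sqrt u \<longrightarrow> \<gamma> u = 1)"

definition gam_t :: "(real \<Rightarrow> real) \<Rightarrow> real \<Rightarrow> real \<Rightarrow> real" where
  "gam_t \<gamma> t u = t * \<gamma> u + (1 - t)"

text \<open>gamma_{eps,t}(a/b), with the value at a/0 = +infinity being gamma_{eps,t}(infinity) = 1.\<close>
definition Gt :: "(real \<Rightarrow> real) \<Rightarrow> real \<Rightarrow> real \<Rightarrow> real \<Rightarrow> real" where
  "Gt \<gamma> t a b = (if b = 0 then 1 else gam_t \<gamma> t (a / b))"

text \<open>In the chart z0 = 1 this is exactly the p_t of the paper
  (r1^2/eta1^2, r2^2/eta2^2, 1/eta0^2); it is symmetric in the three charts.\<close>
definition Pt :: "(real \<Rightarrow> real) \<Rightarrow> real \<Rightarrow> complex \<times> complex \<times> complex \<Rightarrow> complex" where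
  "Pt \<gamma> t w = (case w of (w0, w1, w2) \<Rightarrow>
      complex_of_real (Gt \<gamma> t ((cmod w1)\<^sup>2) (max ((cmod w0)\<^sup>2) ((cmod w2)\<^sup>2))) * w1
    + complex_of_real (Gt \<gamma> t ((cmod w2)\<^sup>2) (max ((cmod w0)\<^sup>2) ((cmod w1)\<^sup>2))) * w2
    + complex_of_real (Gt \<gamma> t ((cmod w0)\<^sup>2) (max ((cmod w1)\<^sup>2) ((cmod w2)\<^sup>2))) * w0)"

text \<open>Smooth branches of p_t: each max(a,b) is replaced by one of a, b
  (s = True selects the first).  A branch is active at w if each selected
  value equals the corresponding max.  p_t is piecewise given by its branches.\<close>
definition sel :: "bool \<Rightarrow> real \<Rightarrow> real \<Rightarrow> real" where
  "sel s a b = (if s then a else b)"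

definition Pbranch :: "(real \<Rightarrow> real) \<Rightarrow> real \<Rightarrow> bool \<Rightarrow> bool \<Rightarrow> bool \<Rightarrow>
    complex \<times> complex \<times> complex \<Rightarrow> complex" where
  "Pbranch \<gamma> t s0 s1 s2 w = (case w of (w0, w1, w2) \<Rightarrow>
      complex_of_real (Gt \<gamma> t ((cmod w1)\<^sup>2) (sel s1 ((cmod w0)\<^sup>2) ((cmod w2)\<^sup>2))) * w1
    + complex_of_real (Gt \<gamma> t ((cmod w2)\<^sup>2) (sel s2 ((cmod w0)\<^sup>2) ((cmod w1)\<^sup>2))) * w2
    + complex_of_real (Gt \<gamma> t ((cmod w0)\<^sup>2) (sel s0 ((cmod w1)\<^sup>2) ((cmod w2)\<^sup>2))) * w0)"

definition branch_active :: "bool \<Rightarrow> bool \<Rightarrow> bool \<Rightarrow> complex \<times> complex \<times> complex \<Rightarrow> bool" where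
  "branch_active s0 s1 s2 w = (case w of (w0, w1, w2) \<Rightarrow>
      sel s1 ((cmod w0)\<^sup>2) ((cmod w2)\<^sup>2) = max ((cmod w0)\<^sup>2) ((cmod w2)\<^sup>2) \<and>
      sel s2 ((cmod w0)\<^sup>2) ((cmod w1)\<^sup>2) = max ((cmod w0)\<^sup>2) ((cmod w1)\<^sup>2) \<and>
      sel s0 ((cmod w1)\<^sup>2) ((cmod w2)\<^sup>2) = max ((cmod w1)\<^sup>2) ((cmod w2)\<^sup>2))"

definition chart :: "nat \<Rightarrow> complex \<times> complex \<Rightarrow> complex \<times> complex \<times> complex" where
  "chart k x = (case x of (a, b) \<Rightarrow>
      (if k = 0 then (1, a, b) else if k = 1 then (a, 1, b) else (a, b, 1)))"

text \<open>Fubini-Study form i del delbar log(1+|x|^2) in affine coordinates: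
  with h_{j kbar} = delta_{jk}/(1+|x|^2) - xbar_j x_k/(1+|x|^2)^2 and
  H(u,v) = sum h_{j kbar} u_j vbar_k one has omega(u,v) = i(H(u,v) - H(v,u)) = -2 Im H(u,v).\<close>
definition herm_FS :: "complex \<times> complex \<Rightarrow> complex \<times> complex \<Rightarrow> complex \<times> complex \<Rightarrow> complex" where
  "herm_FS x u v = (case x of (x1, x2) \<Rightarrow> case u of (u1, u2) \<Rightarrow> case v of (v1, v2) \<Rightarrow>
     let N = complex_of_real (1 + (cmod x1)\<^sup>2 + (cmod x2)\<^sup>2) in
     (u1 * cnj v1 + u2 * cnj v2) / N
       - (cnj x1 * u1 + cnj x2 * u2) * (x1 * cnj v1 + x2 * cnj v2) / N\<^sup>2)"

definition omega_FS :: "complex \<times> complex \<Rightarrow> complex \<times> complex \<Rightarrow> complex \<times> complex \<Rightarrow> real" where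
  "omega_FS x u v = - 2 * Im (herm_FS x u v)"

definition nondeg_on :: "complex \<times> complex \<Rightarrow> (complex \<times> complex) set \<Rightarrow> bool" where
  "nondeg_on x V \<longleftrightarrow> (\<forall>u\<in>V. u \<noteq> 0 \<longrightarrow> (\<exists>v\<in>V. omega_FS x u v \<noteq> 0))"

text \<open>C_t (in chart k) is a (piecewise smooth) symplectic curve for omega_FS:
  at every point of C_t and for every smooth branch of p_t active there, the
  real differential of the branch is surjective (so C_t is cut out transversally)
  and omega_FS is nondegenerate on its kernel, the tangent plane.\<close>
definition symplectic_curve_chart :: "(real \<Rightarrow> real) \<Rightarrow> real \<Rightarrow> nat \<Rightarrow> bool" where
  "symplectic_curve_chart \<gamma> t k \<longleftrightarrow>
     (\<forall>x. Pt \<gamma> t (chart k x) = 0 \<longrightarrow>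
        (\<forall>s0 s1 s2. branch_active s0 s1 s2 (chart k x) \<longrightarrow>
           (\<exists>D. ((\<lambda>y. Pbranch \<gamma> t s0 s1 s2 (chart k y)) has_derivative D) (at x)
                \<and> surj D \<and> nondeg_on x {v. D v = 0})))"

end

theory Submission
  imports Defs
begin

lemma gfacts:
  assumes c: "cutoff A1 A2 \<epsilon> \<gamma>" and e: "0 < \<epsilon>" and A: "0 < A2"
  shows gder: "\<And>u. (\<gamma> has_real_derivative deriv \<gamma> u) (at u)"
    and gpos: "\<And>q. 0 < q \<Longrightarrow> 0 \<le> deriv \<gamma> q"
    and gz: "\<And>q. 0 < q \<Longrightarrow> \<gamma> q = 0 \<Longrightarrow> deriv \<gamma> q = 0"
    and go: "\<And>q. 0 < q \<Longrightarrow> \<gamma> q = 1 \<Longrightarrow> deriv \<gamma> q = 0"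
    and gbig: "\<And>q. (A2*\<epsilon>)\<^sup>2 \<le> q \<Longrightarrow> \<gamma> q = 1"
    and grange: "\<And>q. 0 \<le> q \<Longrightarrow> 0 \<le> \<gamma> q \<and> \<gamma> q \<le> 1"
proof -
  have d0: "\<And>n u. ((deriv ^^ n) \<gamma> has_real_derivative (deriv ^^ Suc n) \<gamma> u) (at u)"
    and r: "\<forall>u\<ge>0. 0 \<le> \<gamma> u \<and> \<gamma> u \<le> 1"
    and m: "\<forall>u v. 0 \<le> u \<longrightarrow> u \<le> v \<longrightarrow> \<gamma> u \<le> \<gamma> v"
    and b: "\<forall>u\<ge>0. A2 * \<epsilon> \<le> sqrt u \<longrightarrow> \<gamma> u = 1"
    using c unfolding cutoff_def by auto
  show gd: "\<And>u. (\<gamma> has_real_derivative deriv \<gamma> u) (at u)"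
    using d0[of 0] by simp
  show "\<And>q. 0 \<le> q \<Longrightarrow> 0 \<le> \<gamma> q \<and> \<gamma> q \<le> 1" using r by auto
  show "0 \<le> deriv \<gamma> q" if q: "0 < q" for q
  proof (rule ccontr)
    assume "\<not> 0 \<le> deriv \<gamma> q"
    then obtain d where "d > 0" "\<forall>h>0. h < d \<longrightarrow> \<gamma> q > \<gamma> (q + h)"
      using DERIV_neg_dec_right[OF gd[of q]] by auto
    then have "\<gamma> q > \<gamma> (q + d/2)" by auto
    moreover have "\<gamma> q \<le> \<gamma> (q + d/2)" using m q \<open>d>0\<close> by auto
    ultimately show False by simp
  qed
  show "deriv \<gamma> q = 0" if q: "0 < q" and z: "\<gamma> q = 0" for q
    by (rule DERIV_local_min[OF gd q]) (use r z in auto)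
  show "deriv \<gamma> q = 0" if q: "0 < q" and z: "\<gamma> q = 1" for q
    by (rule DERIV_local_max[OF gd q]) (use r z in auto)
  show "\<gamma> q = 1" if q: "(A2*\<epsilon>)\<^sup>2 \<le> q" for q
  proof -
    have "0 \<le> q" using q by (smt (verit) zero_le_power2)
    moreover have "A2 * \<epsilon> \<le> sqrt q" using q A e
      by (metis abs_of_pos mult_pos_pos real_le_rsqrt real_sqrt_abs real_sqrt_le_iff)
    ultimately show ?thesis using b by auto
  qed
qed

lemma cmod_sq_c: "complex_of_real ((cmod z)\<^sup>2) = z * cnj z"
  by (fact complex_norm_square)

lemma herm_add: "herm_FS x u (v + w) = herm_FS x u v + herm_FS x u w"
  by (cases x; cases u; cases v; cases w) (simp add: herm_FS_def Let_def divide_inverse algebra_simps)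

lemma omega_add: "omega_FS x u (v + w) = omega_FS x u v + omega_FS x u w"
  by (simp add: omega_FS_def herm_add algebra_simps)

lemma herm_scale: "herm_FS x (u1,u2) (c * v1, c * v2) = cnj c * herm_FS x (u1,u2) (v1,v2)"
  by (cases x) (simp add: herm_FS_def Let_def divide_inverse algebra_simps)

lemma Nc_eq: "complex_of_real (1 + (cmod x1)\<^sup>2 + (cmod x2)\<^sup>2) = 1 + x1 * cnj x1 + x2 * cnj x2"
  by (simp only: of_real_add of_real_1 cmod_sq_c)

lemma herm_poly: "herm_FS (x1,x2) (u1,u2) (v1,v2) =
   (u1 * cnj v1 + u2 * cnj v2) / (1 + x1 * cnj x1 + x2 * cnj x2)
   - (cnj x1 * u1 + cnj x2 * u2) * (x1 * cnj v1 + x2 * cnj v2) / (1 + x1 * cnj x1 + x2 * cnj x2)\<^sup>2"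
  unfolding herm_FS_def Let_def prod.case Nc_eq ..

lemma lagrange2:
  fixes x1 x2 u1 u2 :: complex
  shows "((cmod x1)\<^sup>2 + (cmod x2)\<^sup>2) * ((cmod u1)\<^sup>2 + (cmod u2)\<^sup>2)
     = (cmod (cnj x1 * u1 + cnj x2 * u2))\<^sup>2 + (cmod (x2*u1 - x1*u2))\<^sup>2"
proof -
  have "complex_of_real (((cmod x1)\<^sup>2 + (cmod x2)\<^sup>2) * ((cmod u1)\<^sup>2 + (cmod u2)\<^sup>2))
     = complex_of_real ((cmod (cnj x1 * u1 + cnj x2 * u2))\<^sup>2 + (cmod (x2*u1 - x1*u2))\<^sup>2)"
    unfolding of_real_add of_real_mult cmod_sq_c by (simp add: algebra_simps)
  then show ?thesis using of_real_eq_iff by blast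
qed

lemma omega_iu:
  fixes x1 x2 u1 u2 :: complex
  assumes "(u1, u2) \<noteq> 0"
  shows "omega_FS (x1,x2) (u1,u2) (\<i>*u1, \<i>*u2) > 0"
proof -
  define N where "N = 1 + (cmod x1)\<^sup>2 + (cmod x2)\<^sup>2"
  have Npos: "N > 0" unfolding N_def by (simp add: add_pos_nonneg)
  define S where "S = (cmod u1)\<^sup>2 + (cmod u2)\<^sup>2"
  define P where "P = (cmod (cnj x1 * u1 + cnj x2 * u2))\<^sup>2"
  have Spos: "S > 0" using assms unfolding S_def zero_prod_def
    by (cases "u1 = 0") (auto intro: add_pos_nonneg)
  have P: "P \<le> (N - 1) * S" unfolding P_def S_def N_def using lagrange2[of x1 x2 u1 u2] by simp
  have hu: "herm_FS (x1,x2) (u1,u2) (u1, u2) = complex_of_real (S / N - P / N\<^sup>2)"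
  proof -
    have "complex_of_real (S / N - P / N\<^sup>2) = complex_of_real S / complex_of_real N - complex_of_real P / (complex_of_real N)\<^sup>2"
      by simp
    also have "complex_of_real N = 1 + x1 * cnj x1 + x2 * cnj x2" unfolding N_def by (rule Nc_eq)
    also have "complex_of_real S = u1 * cnj u1 + u2 * cnj u2" unfolding S_def by (simp only: of_real_add cmod_sq_c)
    also have "complex_of_real P = (cnj x1 * u1 + cnj x2 * u2) * (x1 * cnj u1 + x2 * cnj u2)" unfolding P_def cmod_sq_c
      by simp
    finally show ?thesis unfolding herm_poly by simp
  qed
  have h: "herm_FS (x1,x2) (u1,u2) (\<i>*u1, \<i>*u2) = - \<i> * complex_of_real (S / N - P / N\<^sup>2)"
    using herm_scale[of "(x1,x2)" u1 u2 \<i> u1 u2] hu by simp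
  have "omega_FS (x1,x2) (u1,u2) (\<i>*u1, \<i>*u2) = 2 * (S / N - P / N\<^sup>2)"
    unfolding omega_FS_def h by simp
  moreover have "S / N - P / N\<^sup>2 > 0"
  proof -
    have "P < N * S" using P Spos by (simp add: algebra_simps)
    then have "P / N\<^sup>2 < S / N" using Npos by (simp add: field_simps power2_eq_square)
    then show ?thesis by simp
  qed
  ultimately show ?thesis by simp
qed


lemma L1:
  fixes a1 a2 b1 b2 x1 x2 :: complex and D :: "complex \<times> complex \<Rightarrow> complex"
  assumes Dd: "\<And>u1 u2. D (u1,u2) = a1 * u1 + a2 * u2 + b1 * cnj u1 + b2 * cnj u2"
  and Dl: "(cmod (a1 * x1 + a2 * x2))\<^sup>2 + (cmod a1)\<^sup>2 + (cmod a2)\<^sup>2 \<noteq>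
          (cmod (b1 * cnj x1 + b2 * cnj x2))\<^sup>2 + (cmod b1)\<^sup>2 + (cmod b2)\<^sup>2"
  shows "surj D \<and> nondeg_on (x1,x2) {v. D v = 0}"
proof -
  define Nc where "Nc = 1 + x1 * cnj x1 + x2 * cnj x2"
  have Nc0: "Nc \<noteq> 0"
  proof -
    have "Nc = complex_of_real (1 + (cmod x1)\<^sup>2 + (cmod x2)\<^sup>2)" unfolding Nc_def Nc_eq ..
    moreover have "1 + (cmod x1)\<^sup>2 + (cmod x2)\<^sup>2 > 0" by (simp add: add_pos_nonneg)
    ultimately show ?thesis by (metis less_irrefl of_real_eq_0_iff)
  qed
  define a0 where "a0 = - (a1 * x1 + a2 * x2)"
  define b0 where "b0 = - (b1 * cnj x1 + b2 * cnj x2)"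
  define Dc where "Dc = a0 * cnj a0 + a1 * cnj a1 + a2 * cnj a2 - b0 * cnj b0 - b1 * cnj b1 - b2 * cnj b2"
  have Dc0: "Dc \<noteq> 0"
  proof -
    have "Dc = complex_of_real ((cmod (a1 * x1 + a2 * x2))\<^sup>2 + (cmod a1)\<^sup>2 + (cmod a2)\<^sup>2 -
          ((cmod (b1 * cnj x1 + b2 * cnj x2))\<^sup>2 + (cmod b1)\<^sup>2 + (cmod b2)\<^sup>2))"
      unfolding Dc_def a0_def b0_def of_real_add of_real_diff cmod_sq_c by (simp add: algebra_simps)
    moreover have "(cmod (a1 * x1 + a2 * x2))\<^sup>2 + (cmod a1)\<^sup>2 + (cmod a2)\<^sup>2 -
          ((cmod (b1 * cnj x1 + b2 * cnj x2))\<^sup>2 + (cmod b1)\<^sup>2 + (cmod b2)\<^sup>2) \<noteq> 0"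
      using Dl by simp
    ultimately show ?thesis by (simp only: of_real_eq_0_iff) simp
  qed
  define Y where "Y z = (Nc * ((cnj a1 - x1 * cnj a0) * z - (b1 - x1 * b0) * cnj z),
                         Nc * ((cnj a2 - x2 * cnj a0) * z - (b2 - x2 * b0) * cnj z))" for z
  have DY: "D (Y z) = Nc * Dc * z" for z
    unfolding Y_def Dd Dc_def Nc_def a0_def b0_def by (simp add: algebra_simps)
  have Dadd: "D (p + q) = D p + D q" for p q
    by (cases p; cases q) (simp add: Dd algebra_simps)
  have hY: "Im (herm_FS (x1,x2) u (Y z)) = 0" if "D u = 0" for u z
  proof -
    obtain u1 u2 where u: "u = (u1,u2)" by (cases u)
    define \<beta> where "\<beta> = b1 * cnj u1 + b2 * cnj u2"
    have au: "a1 * u1 + a2 * u2 = - \<beta>" unfolding eq_neg_iff_add_eq_0 using that unfolding u Dd \<beta>_def by (simp add: algebra_simps)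
    have bu: "cnj b1 * u1 + cnj b2 * u2 = cnj \<beta>" unfolding \<beta>_def by simp
    have "herm_FS (x1,x2) (u1,u2) (Y z) = cnj z * (a1 * u1 + a2 * u2) - z * (cnj b1 * u1 + cnj b2 * u2)"
      unfolding Y_def herm_poly Nc_def[symmetric] using Nc0
      by (simp add: field_simps power2_eq_square) (simp add: Nc_def a0_def b0_def algebra_simps)
    also have "\<dots> = - (cnj z * \<beta> + cnj (cnj z * \<beta>))" unfolding au bu by simp
    finally show ?thesis unfolding u by (simp del: complex_cnj_mult)
  qed
  have surj: "surj D"
  proof -
    have "D (Y (z / (Nc * Dc))) = z" for z using DY Nc0 Dc0 by simp
    then show ?thesis unfolding surj_def by metis
  qed
  have "nondeg_on (x1,x2) {v. D v = 0}"
    unfolding nondeg_on_def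
  proof (intro ballI impI)
    fix u assume uk: "u \<in> {v. D v = 0}" and u0: "u \<noteq> 0"
    obtain u1 u2 where u: "u = (u1,u2)" by (cases u)
    define z0 where "z0 = - D (\<i> * u1, \<i> * u2) / (Nc * Dc)"
    define v where "v = (\<i> * u1, \<i> * u2) + Y z0"
    have "D v = 0" unfolding v_def Dadd DY z0_def using Nc0 Dc0 by simp
    moreover have "omega_FS (x1,x2) u v \<noteq> 0"
    proof -
      have "omega_FS (x1,x2) u v = omega_FS (x1,x2) u (\<i> * u1, \<i> * u2) + omega_FS (x1,x2) u (Y z0)"
        unfolding v_def omega_add ..
      moreover have "omega_FS (x1,x2) u (Y z0) = 0" using hY[of u z0] uk unfolding omega_FS_def by simp
      moreover have "omega_FS (x1,x2) u (\<i> * u1, \<i> * u2) > 0" using omega_iu[of u1 u2 x1 x2] u0 u by simp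
      ultimately show ?thesis by simp
    qed
    ultimately show "\<exists>v\<in>{v. D v = 0}. omega_FS (x1, x2) u v \<noteq> 0" by blast
  qed
  with surj show ?thesis by simp
qed

lemma sq_deriv:
  fixes g :: "'a::real_normed_vector \<Rightarrow> complex"
  assumes "(g has_derivative G) (at x)"
  shows "((\<lambda>y. (cmod (g y))\<^sup>2) has_derivative (\<lambda>u. 2 * Re (cnj (g x) * G u))) (at x)"
proof -
  have e: "(\<lambda>y. (cmod (g y))\<^sup>2) = (\<lambda>y. Re (g y) * Re (g y) + Im (g y) * Im (g y))" unfolding fun_eq_iff by (metis cmod_power2 power2_eq_square)
  have r: "((\<lambda>y. Re (g y)) has_derivative (\<lambda>u. Re (G u))) (at x)" using has_derivative_Re[OF assms] .
  have i: "((\<lambda>y. Im (g y)) has_derivative (\<lambda>u. Im (G u))) (at x)" using has_derivative_Im[OF assms] .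
  have "((\<lambda>y. Re (g y) * Re (g y) + Im (g y) * Im (g y)) has_derivative
     (\<lambda>u. (Re (g x) * Re (G u) + Re (G u) * Re (g x)) + (Im (g x) * Im (G u) + Im (G u) * Im (g x)))) (at x)"
    by (intro has_derivative_add has_derivative_mult r i)
  then show ?thesis unfolding e
    by (rule has_derivative_eq_rhs) (simp add: algebra_simps fun_eq_iff power2_eq_square)
qed

lemma term_deriv:
  fixes f h :: "complex \<times> complex \<Rightarrow> complex"
  assumes gd: "\<And>v. (\<gamma> has_real_derivative deriv \<gamma> v) (at v)"
  and fd: "(f has_derivative F) (at x)" and hd: "(h has_derivative H) (at x)" and h0: "h x \<noteq> 0"
  shows "((\<lambda>y. complex_of_real (Gt \<gamma> t ((cmod (f y))\<^sup>2) ((cmod (h y))\<^sup>2)) * f y) has_derivative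
     (\<lambda>u. complex_of_real (gam_t \<gamma> t ((cmod (f x))\<^sup>2 / (cmod (h x))\<^sup>2)) * F u
        + f x * complex_of_real (t * deriv \<gamma> ((cmod (f x))\<^sup>2 / (cmod (h x))\<^sup>2) *
           ((2 * Re (cnj (f x) * F u) * (cmod (h x))\<^sup>2 - (cmod (f x))\<^sup>2 * (2 * Re (cnj (h x) * H u)))
             / ((cmod (h x))\<^sup>2)\<^sup>2)))) (at x)"
proof -
  let ?q = "\<lambda>y. (cmod (f y))\<^sup>2 / (cmod (h y))\<^sup>2"
  let ?dq = "\<lambda>u. (2 * Re (cnj (f x) * F u) * (cmod (h x))\<^sup>2 - (cmod (f x))\<^sup>2 * (2 * Re (cnj (h x) * H u)))
             / ((cmod (h x))\<^sup>2)\<^sup>2"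
  have hx: "(cmod (h x))\<^sup>2 \<noteq> 0" using h0 by simp
  have qd: "(?q has_derivative ?dq) (at x)"
    using has_derivative_divide'[OF sq_deriv[OF fd] sq_deriv[OF hd] hx]
    by (rule has_derivative_eq_rhs) (simp add: fun_eq_iff power2_eq_square)
  have gtd: "(gam_t \<gamma> t has_derivative (\<lambda>v. (t * deriv \<gamma> w) * v)) (at w)" for w
  proof -
    have "(gam_t \<gamma> t has_real_derivative t * deriv \<gamma> w) (at w)"
      unfolding gam_t_def[abs_def]
      by (rule derivative_eq_intros gd | simp)+
    then show ?thesis by (simp add: has_field_derivative_def)
  qed
  have cd: "((\<lambda>y. gam_t \<gamma> t (?q y)) has_derivative (\<lambda>u. (t * deriv \<gamma> (?q x)) * ?dq u)) (at x)"
    using has_derivative_compose[OF qd gtd] .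
  have pd: "((\<lambda>y. complex_of_real (gam_t \<gamma> t (?q y)) * f y) has_derivative
     (\<lambda>u. complex_of_real (gam_t \<gamma> t (?q x)) * F u + f x * complex_of_real (t * deriv \<gamma> (?q x) * ?dq u))) (at x)"
    using has_derivative_mult[OF has_derivative_of_real[OF cd] fd]
    by (rule has_derivative_eq_rhs) (simp add: fun_eq_iff mult.commute mult.left_commute)
  have ev: "\<forall>\<^sub>F y in at x. h y \<noteq> 0"
  proof -
    have "(h \<longlongrightarrow> h x) (at x)" using has_derivative_continuous[OF hd] by (simp add: continuous_at)
    from tendsto_imp_eventually_ne[OF this h0] show ?thesis .
  qed
  show ?thesis
    apply (rule has_derivative_transform_eventually[OF pd])
    using ev h0 by (auto simp: Gt_def elim!: eventually_mono)
qed

definition Wc :: "complex \<times> complex \<times> complex \<Rightarrow> nat \<Rightarrow> complex" where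
  "Wc w m = (case w of (w0, w1, w2) \<Rightarrow> if m = 0 then w0 else if m = 1 then w1 else w2)"
definition o1 :: "nat \<Rightarrow> nat" where "o1 m = (if m = 0 then 1 else 0)"
definition o2 :: "nat \<Rightarrow> nat" where "o2 m = (if m = 2 then 1 else 2)"
definition kk :: "bool \<Rightarrow> bool \<Rightarrow> bool \<Rightarrow> nat \<Rightarrow> nat" where
  "kk s0 s1 s2 m = (if (if m = 0 then s0 else if m = 1 then s1 else s2) then o1 m else o2 m)"
definition Mx :: "complex \<times> complex \<times> complex \<Rightarrow> nat \<Rightarrow> real" where
  "Mx w m = max ((cmod (Wc w (o1 m)))\<^sup>2) ((cmod (Wc w (o2 m)))\<^sup>2)"
definition Uc :: "nat \<Rightarrow> complex \<times> complex \<Rightarrow> nat \<Rightarrow> complex" where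
  "Uc k u m = (if m = k then 0 else if m = o1 k then fst u else snd u)"

lemma sum3: "(\<Sum>m<3. f m) = f 0 + f 1 + f (2::nat)"
  by (simp add: numeral_3_eq_3 numeral_2_eq_2 lessThan_Suc add_ac)

lemma all3: "(\<forall>m<3. P m) \<longleftrightarrow> P 0 \<and> P 1 \<and> P (2::nat)"
  by (auto simp: numeral_3_eq_3 numeral_2_eq_2 less_Suc_eq)

lemma Pt_sum: "Pt \<gamma> t w = (\<Sum>m<3. complex_of_real (Gt \<gamma> t ((cmod (Wc w m))\<^sup>2) (Mx w m)) * Wc w m)"
  by (cases w) (simp add: sum3 Pt_def Wc_def Mx_def o1_def o2_def add_ac)

lemma Pb_sum: "Pbranch \<gamma> t s0 s1 s2 w =
   (\<Sum>m<3. complex_of_real (Gt \<gamma> t ((cmod (Wc w m))\<^sup>2) ((cmod (Wc w (kk s0 s1 s2 m)))\<^sup>2)) * Wc w m)"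
  by (cases w; cases s0; cases s1; cases s2) (simp_all add: sum3 Pbranch_def sel_def Wc_def kk_def o1_def o2_def add_ac)

lemma active_iff: "branch_active s0 s1 s2 w \<longleftrightarrow> (\<forall>m<3. (cmod (Wc w (kk s0 s1 s2 m)))\<^sup>2 = Mx w m)"
  unfolding all3 by (cases w; cases s0; cases s1; cases s2) (simp_all add: branch_active_def sel_def Wc_def kk_def o1_def o2_def Mx_def conj_ac)

lemma kk_props: "m < 3 \<Longrightarrow> kk s0 s1 s2 m < 3 \<and> kk s0 s1 s2 m \<noteq> m"
  by (auto simp: kk_def o1_def o2_def)

lemma Wc_chart: "k < 3 \<Longrightarrow> m < 3 \<Longrightarrow> Wc (chart k y) m = (if m = k then 1 else if m = o1 k then fst y else snd y)"
proof -
  assume "k < 3" "m < 3"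
  then have "k = 0 \<or> k = 1 \<or> k = 2" "m = 0 \<or> m = 1 \<or> m = 2" by auto
  then show ?thesis by (cases y) (auto simp: Wc_def chart_def o1_def)
qed

lemma Wc_chart_deriv: "k < 3 \<Longrightarrow> m < 3 \<Longrightarrow> ((\<lambda>y. Wc (chart k y) m) has_derivative (\<lambda>u. Uc k u m)) (at x)"
proof -
  assume k: "k < 3" and m: "m < 3"
  have "(\<lambda>y. Wc (chart k y) m) = (\<lambda>y. if m = k then 1 else if m = o1 k then fst y else snd y)"
    using Wc_chart[OF k m] by (auto simp: fun_eq_iff)
  moreover have "((\<lambda>y. if m = k then 1 else if m = o1 k then fst y else snd y) has_derivative (\<lambda>u. Uc k u m)) (at x)"
    unfolding Uc_def by (cases "m = k"; cases "m = o1 k")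
      (simp_all add: bounded_linear_imp_has_derivative bounded_linear_fst bounded_linear_snd)
  ultimately show ?thesis by simp
qed

lemma Uc_k: "Uc k u k = 0" by (simp add: Uc_def)

lemma cm_neg: "cmod (- a - b) = cmod (a + b)"
proof -
  have "- a - b = - (a + b)" by simp
  then show ?thesis by (simp only: norm_minus_cancel)
qed

lemma L1h:
  fixes A B :: "nat \<Rightarrow> complex" and D :: "complex \<times> complex \<Rightarrow> complex"
  assumes k: "k < 3"
  and Dd: "\<And>u. D u = (\<Sum>n<3. A n * Uc k u n + B n * cnj (Uc k u n))"
  and Aw: "(\<Sum>n<3. A n * Wc (chart k x) n) = 0"
  and Bw: "(\<Sum>n<3. B n * cnj (Wc (chart k x) n)) = 0"
  and Dl: "(\<Sum>n<3. (cmod (A n))\<^sup>2) \<noteq> (\<Sum>n<3. (cmod (B n))\<^sup>2)"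
  shows "surj D \<and> nondeg_on x {v. D v = 0}"
proof -
  obtain x1 x2 where x: "x = (x1, x2)" by (cases x)
  have k3: "k = 0 \<or> k = 1 \<or> k = 2" using k by auto
  then show ?thesis
  proof (elim disjE)
    assume k0: "k = 0"
    have a0: "A 0 = - (A 1 * x1 + A 2 * x2)" using Aw unfolding sum3 k0 x
      by (simp add: Wc_def chart_def eq_neg_iff_add_eq_0 algebra_simps)
    have b0: "B 0 = - (B 1 * cnj x1 + B 2 * cnj x2)" using Bw unfolding sum3 k0 x
      by (simp add: Wc_def chart_def eq_neg_iff_add_eq_0 algebra_simps)
    show ?thesis unfolding x
      apply (rule L1[of D "A 1" "A 2" "B 1" "B 2"])
      using Dd Dl unfolding sum3 k0 a0 b0 by (simp_all add: Uc_def o1_def algebra_simps cm_neg)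
  next
    assume k1: "k = 1"
    have a0: "A 1 = - (A 0 * x1 + A 2 * x2)" using Aw unfolding sum3 k1 x
      by (simp add: Wc_def chart_def eq_neg_iff_add_eq_0 algebra_simps)
    have b0: "B 1 = - (B 0 * cnj x1 + B 2 * cnj x2)" using Bw unfolding sum3 k1 x
      by (simp add: Wc_def chart_def eq_neg_iff_add_eq_0 algebra_simps)
    show ?thesis unfolding x
      apply (rule L1[of D "A 0" "A 2" "B 0" "B 2"])
      using Dd Dl unfolding sum3 k1 a0 b0 by (simp_all add: Uc_def o1_def algebra_simps cm_neg)
  next
    assume k2: "k = 2"
    have a0: "A 2 = - (A 0 * x1 + A 1 * x2)" using Aw unfolding sum3 k2 x
      by (simp add: Wc_def chart_def eq_neg_iff_add_eq_0 algebra_simps)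
    have b0: "B 2 = - (B 0 * cnj x1 + B 1 * cnj x2)" using Bw unfolding sum3 k2 x
      by (simp add: Wc_def chart_def eq_neg_iff_add_eq_0 algebra_simps)
    show ?thesis unfolding x
      apply (rule L1[of D "A 0" "A 1" "B 0" "B 1"])
      using Dd Dl unfolding sum3 k2 a0 b0 by (simp_all add: Uc_def o1_def algebra_simps cm_neg)
  qed
qed

lemma core_id:
  fixes ci ck cj e :: real and Wi Wk :: complex
  shows "(cmod (complex_of_real ci + complex_of_real (e * (cmod Wk)\<^sup>2 * (cmod Wi)\<^sup>2)))\<^sup>2
       + (cmod (complex_of_real ck - complex_of_real (e * (cmod Wi)\<^sup>2) * Wi * cnj Wk))\<^sup>2
       + (cmod (complex_of_real cj))\<^sup>2
       - ((cmod (complex_of_real (e * (cmod Wk)\<^sup>2) * Wi * Wi))\<^sup>2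
          + (cmod (- (complex_of_real (e * (cmod Wi)\<^sup>2) * Wi * Wk)))\<^sup>2)
     = ci\<^sup>2 + ck\<^sup>2 + cj\<^sup>2 + 2 * e * (cmod Wi)\<^sup>2 * (ci * (cmod Wk)\<^sup>2 - ck * Re (Wi * cnj Wk))"
proof -
  have r: "complex_of_real (Re z) = (z + cnj z) / 2" for z by (simp add: complex_add_cnj)
  have "complex_of_real (lhs) = complex_of_real (rhs)" if "lhs = rhs" for lhs rhs :: real using that by simp
  show ?thesis
    apply (rule of_real_eq_iff[where 'a=complex, THEN iffD1])
    apply (simp only: of_real_add of_real_diff of_real_mult cmod_sq_c r of_real_numeral)
    apply (simp add: algebra_simps power2_eq_square)
    done
qed

lemma re_nonpos:
  fixes Wi Wk Wj :: complex and ci cj :: real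
  assumes curve: "complex_of_real ci * Wi + Wk + complex_of_real cj * Wj = 0"
  and cj: "0 \<le> cj" "cj \<le> 1" and jk: "cmod Wj \<le> cmod Wk" and ci: "ci > 0"
  shows "Re (Wi * cnj Wk) \<le> 0"
proof -
  have "Wk + complex_of_real ci * Wi = - (complex_of_real cj * Wj)" using curve by (simp add: algebra_simps eq_neg_iff_add_eq_0)
  then have "cmod (Wk + complex_of_real ci * Wi) = cj * cmod Wj" using cj by (simp add: norm_mult)
  also have "\<dots> \<le> cmod Wk" using cj jk by (meson dual_order.trans mult_left_le_one_le norm_ge_zero)
  finally have le: "(cmod (Wk + complex_of_real ci * Wi))\<^sup>2 \<le> (cmod Wk)\<^sup>2" by (simp add: power_mono)
  have ex: "(cmod (Wk + complex_of_real ci * Wi))\<^sup>2 = (cmod Wk)\<^sup>2 + 2 * ci * Re (Wi * cnj Wk) + ci\<^sup>2 * (cmod Wi)\<^sup>2"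
  proof -
    have r: "complex_of_real (Re z) = (z + cnj z) / 2" for z by (simp add: complex_add_cnj)
    show ?thesis
      apply (rule of_real_eq_iff[where 'a=complex, THEN iffD1])
      apply (simp only: of_real_add of_real_diff of_real_mult cmod_sq_c r of_real_numeral)
      apply (simp add: algebra_simps power2_eq_square)
      done
  qed
  have "2 * ci * Re (Wi * cnj Wk) \<le> - (ci\<^sup>2 * (cmod Wi)\<^sup>2)" using le ex by linarith
  also have "\<dots> \<le> 0" by simp
  finally have "ci * Re (Wi * cnj Wk) \<le> 0" by simp
  then show ?thesis using ci by (simp add: mult_le_0_iff)
qed

lemma two_small:
  fixes a b c \<delta> :: real
  assumes d: "0 < \<delta>" "\<delta> < 1/2" and nn: "0 \<le> a" "0 \<le> b" "0 \<le> c"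
  and ha: "a\<^sup>2 < \<delta>\<^sup>2 * max (b\<^sup>2) (c\<^sup>2)" and hb: "b\<^sup>2 < \<delta>\<^sup>2 * max (a\<^sup>2) (c\<^sup>2)"
  and hc: "a\<^sup>2 \<le> c\<^sup>2 \<Longrightarrow> b\<^sup>2 \<le> c\<^sup>2 \<Longrightarrow> c \<le> a + b"
  shows False
proof -
  have d2: "\<delta>\<^sup>2 < 1"
  proof -
    have "\<delta> * \<delta> < 1 * 1" using d by (intro mult_strict_mono) auto
    then show ?thesis by (simp add: power2_eq_square)
  qed
  have sc: "\<delta>\<^sup>2 * z \<le> z" if "0 \<le> z" for z
    using mult_right_mono[of "\<delta>\<^sup>2" 1 z] d2 that by simp
  consider "c\<^sup>2 \<le> b\<^sup>2" | "c\<^sup>2 \<le> a\<^sup>2" | "a\<^sup>2 \<le> c\<^sup>2 \<and> b\<^sup>2 \<le> c\<^sup>2" by linarith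
  then show False
  proof cases
    case 1
    then have "a\<^sup>2 < \<delta>\<^sup>2 * b\<^sup>2" using ha by (simp add: max_def)
    then have "a\<^sup>2 < b\<^sup>2" using sc[of "b\<^sup>2"] by simp
    then have "max (a\<^sup>2) (c\<^sup>2) \<le> b\<^sup>2" using 1 by simp
    then have "\<delta>\<^sup>2 * max (a\<^sup>2) (c\<^sup>2) \<le> \<delta>\<^sup>2 * b\<^sup>2" by (rule mult_left_mono) simp
    then have "b\<^sup>2 < \<delta>\<^sup>2 * b\<^sup>2" using hb by linarith
    then show False using sc[of "b\<^sup>2"] by simp
  next
    case 2
    then have "b\<^sup>2 < \<delta>\<^sup>2 * a\<^sup>2" using hb by (simp add: max_def)
    then have "b\<^sup>2 < a\<^sup>2" using sc[of "a\<^sup>2"] by simp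
    then have "max (b\<^sup>2) (c\<^sup>2) \<le> a\<^sup>2" using 2 by simp
    then have "\<delta>\<^sup>2 * max (b\<^sup>2) (c\<^sup>2) \<le> \<delta>\<^sup>2 * a\<^sup>2" by (rule mult_left_mono) simp
    then have "a\<^sup>2 < \<delta>\<^sup>2 * a\<^sup>2" using ha by linarith
    then show False using sc[of "a\<^sup>2"] by simp
  next
    case 3
    then have "a\<^sup>2 < (\<delta> * c)\<^sup>2" "b\<^sup>2 < (\<delta> * c)\<^sup>2" using ha hb by (auto simp: max_def power_mult_distrib)
    then have "a < \<delta> * c" "b < \<delta> * c"
      using nn d by (auto intro: power_less_imp_less_base)
    moreover have "c \<le> a + b" using hc 3 by auto
    moreover have "2 * \<delta> * c \<le> c" using mult_right_mono[of "2*\<delta>" 1 c] d nn by simp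
    ultimately show False by linarith
  qed
qed

lemma sum3_perm:
  assumes "i < 3" "j < 3" "l < 3" "i \<noteq> j" "i \<noteq> l" "j \<noteq> l"
  shows "(\<Sum>m<3. f m) = f i + f j + f (l::nat)"
proof -
  have "i = 0 \<or> i = 1 \<or> i = 2" "j = 0 \<or> j = 1 \<or> j = 2" "l = 0 \<or> l = 1 \<or> l = 2" using assms by auto
  then show ?thesis using assms unfolding sum3 by (auto simp: add_ac)
qed

lemma Mx_perm:
  assumes "i < 3" "j < 3" "l < 3" "i \<noteq> j" "i \<noteq> l" "j \<noteq> l"
  shows "Mx w i = max ((cmod (Wc w j))\<^sup>2) ((cmod (Wc w l))\<^sup>2)"
proof -
  have "i = 0 \<or> i = 1 \<or> i = 2" "j = 0 \<or> j = 1 \<or> j = 2" "l = 0 \<or> l = 1 \<or> l = 2" using assms by auto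
  then show ?thesis using assms unfolding Mx_def o1_def o2_def by (auto simp: max.commute)
qed

lemma third:
  assumes "i < 3" "j < 3" "i \<noteq> (j::nat)"
  shows "3 - i - j < 3 \<and> 3 - i - j \<noteq> i \<and> 3 - i - j \<noteq> j"
proof -
  have "i = 0 \<or> i = 1 \<or> i = 2" "j = 0 \<or> j = 1 \<or> j = 2" using assms by auto
  then show ?thesis using assms by auto
qed

lemma o12:
  assumes "k < 3"
  shows "o1 k < 3 \<and> o2 k < 3 \<and> o1 k \<noteq> k \<and> o2 k \<noteq> k \<and> o1 k \<noteq> o2 k"
proof -
  have "k = 0 \<or> k = 1 \<or> k = 2" using assms by auto
  then show ?thesis by (auto simp: o1_def o2_def)
qed

lemma o12_other:
  assumes "k < 3" "m < 3" "m \<noteq> k"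
  shows "k = o1 m \<or> k = o2 m"
proof -
  have "k = 0 \<or> k = 1 \<or> k = 2" "m = 0 \<or> m = 1 \<or> m = 2" using assms by auto
  then show ?thesis using assms by (auto simp: o1_def o2_def)
qed

lemma cmod_sq_c2: "(complex_of_real (cmod z))\<^sup>2 = z * cnj z"
  using complex_norm_square[of z] by simp

lemma re_c: "complex_of_real (Re z) = (z + cnj z) / 2"
  by (simp add: complex_add_cnj)


lemma in3:
  assumes "i < 3" "j < 3" "l < 3" "i \<noteq> j" "i \<noteq> l" "j \<noteq> l" "m < (3::nat)"
  shows "m = i \<or> m = j \<or> m = l"
proof -
  have "i = 0 \<or> i = 1 \<or> i = 2" "j = 0 \<or> j = 1 \<or> j = 2" "l = 0 \<or> l = 1 \<or> l = 2" "m = 0 \<or> m = 1 \<or> m = 2"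
    using assms by auto
  then show ?thesis using assms by auto
qed

lemma ex_id:
  fixes Wi Wk Ui Uk :: complex and d M e :: real
  assumes M: "M = (cmod Wk)\<^sup>2" and e: "e = d / M\<^sup>2"
  shows "Wi * complex_of_real (d * ((2 * Re (cnj Wi * Ui) * M - (cmod Wi)\<^sup>2 * (2 * Re (cnj Wk * Uk))) / M\<^sup>2)) =
     complex_of_real (e * (cmod Wk)\<^sup>2 * (cmod Wi)\<^sup>2) * Ui + complex_of_real (e * (cmod Wk)\<^sup>2) * Wi * Wi * cnj Ui
     - complex_of_real (e * (cmod Wi)\<^sup>2) * Wi * cnj Wk * Uk - complex_of_real (e * (cmod Wi)\<^sup>2) * Wi * Wk * cnj Uk"
proof -
  have "d * ((2 * Re (cnj Wi * Ui) * M - (cmod Wi)\<^sup>2 * (2 * Re (cnj Wk * Uk))) / M\<^sup>2)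
      = e * (cmod Wk)\<^sup>2 * (2 * Re (cnj Wi * Ui)) - e * (cmod Wi)\<^sup>2 * (2 * Re (cnj Wk * Uk))"
    unfolding e M by (simp add: divide_inverse algebra_simps)
  moreover have "complex_of_real (e * (cmod Wk)\<^sup>2 * (2 * Re (cnj Wi * Ui)) - e * (cmod Wi)\<^sup>2 * (2 * Re (cnj Wk * Uk)))
     = complex_of_real (e * (cmod Wk)\<^sup>2) * (cnj Wi * Ui + Wi * cnj Ui) - complex_of_real (e * (cmod Wi)\<^sup>2) * (cnj Wk * Uk + Wk * cnj Uk)"
    by (simp only: of_real_diff of_real_mult of_real_numeral re_c complex_cnj_mult complex_cnj_cnj) (simp add: field_simps)
  ultimately have "Wi * complex_of_real (d * ((2 * Re (cnj Wi * Ui) * M - (cmod Wi)\<^sup>2 * (2 * Re (cnj Wk * Uk))) / M\<^sup>2))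
     = Wi * (complex_of_real (e * (cmod Wk)\<^sup>2) * (cnj Wi * Ui + Wi * cnj Ui) - complex_of_real (e * (cmod Wi)\<^sup>2) * (cnj Wk * Uk + Wk * cnj Uk))"
    by simp
  also have "\<dots> = complex_of_real (e * (cmod Wk)\<^sup>2 * (cmod Wi)\<^sup>2) * Ui + complex_of_real (e * (cmod Wk)\<^sup>2) * Wi * Wi * cnj Ui
     - complex_of_real (e * (cmod Wi)\<^sup>2) * Wi * cnj Wk * Uk - complex_of_real (e * (cmod Wi)\<^sup>2) * Wi * Wk * cnj Uk"
  proof -
    have "complex_of_real (e * (cmod Wk)\<^sup>2 * (cmod Wi)\<^sup>2) = complex_of_real (e * (cmod Wk)\<^sup>2) * (Wi * cnj Wi)"
      by (simp only: of_real_mult cmod_sq_c)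
    then show ?thesis by (simp add: algebra_simps cmod_sq_c2)
  qed
  finally show ?thesis .
qed

lemma point_ok:
  assumes cf: "cutoff A1 A2 \<epsilon> \<gamma>" and e: "0 < \<epsilon>" and A2: "0 < A2" and es: "A2 * \<epsilon> < 1/2"
  and t: "0 \<le> t" "t \<le> 1" and k: "k < 3"
  and P0: "Pt \<gamma> t (chart k x) = 0" and act: "branch_active s0 s1 s2 (chart k x)"
  shows "\<exists>D. ((\<lambda>y. Pbranch \<gamma> t s0 s1 s2 (chart k y)) has_derivative D) (at x) \<and> surj D \<and> nondeg_on x {v. D v = 0}"
proof -
  define w where "w = chart k x"
  define W where "W m = Wc w m" for m
  define K where "K = kk s0 s1 s2"
  define \<delta> where "\<delta> = A2 * \<epsilon>"
  have \<delta>: "0 < \<delta>" "\<delta> < 1/2" using e A2 es unfolding \<delta>_def by auto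
  have Wk: "W k = 1" unfolding W_def w_def using Wc_chart[OF k k] by simp
  have actm: "\<And>m. m < 3 \<Longrightarrow> (cmod (W (K m)))\<^sup>2 = Mx w m"
    using act unfolding active_iff W_def K_def w_def by auto
  have Kp: "\<And>m. m < 3 \<Longrightarrow> K m < 3 \<and> K m \<noteq> m" unfolding K_def by (rule kk_props)
  have Mxnn: "\<And>m. 0 \<le> Mx w m" unfolding Mx_def by (simp add: le_max_iff_disj)
  have Mxpos: "\<And>m. m < 3 \<Longrightarrow> Mx w m > 0"
  proof -
    fix m :: nat assume m: "m < 3"
    show "Mx w m > 0"
    proof (cases "m = k")
      case False
      then have "k = o1 m \<or> k = o2 m" using o12_other[OF k m] by simp
      then have "1 \<le> Mx w m" unfolding Mx_def using Wk unfolding W_def by auto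
      then show ?thesis by simp
    next
      case True
      show ?thesis
      proof (rule ccontr)
        assume "\<not> 0 < Mx w m"
        then have M0: "Mx w k = 0" using Mxnn[of m] True by simp
        then have z: "W (o1 k) = 0" "W (o2 k) = 0" unfolding Mx_def W_def
          by (metis max.cobounded1 max.cobounded2 norm_le_zero_iff order_antisym zero_le_power2 power_zero_numeral zero_less_power2 le_less)+
        have "Pt \<gamma> t w = (\<Sum>m<3. complex_of_real (Gt \<gamma> t ((cmod (W m))\<^sup>2) (Mx w m)) * W m)"
          unfolding Pt_sum W_def ..
        also have "\<dots> = complex_of_real (Gt \<gamma> t ((cmod (W k))\<^sup>2) (Mx w k)) * W k
            + complex_of_real (Gt \<gamma> t ((cmod (W (o1 k)))\<^sup>2) (Mx w (o1 k))) * W (o1 k)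
            + complex_of_real (Gt \<gamma> t ((cmod (W (o2 k)))\<^sup>2) (Mx w (o2 k))) * W (o2 k)"
          using o12[OF k] k by (intro sum3_perm) auto
        also have "\<dots> = 1" using z M0 Wk by (simp add: Gt_def)
        finally show False using P0 unfolding w_def by simp
      qed
    qed
  qed
  define q where "q m = (cmod (W m))\<^sup>2 / Mx w m" for m
  define c where "c m = gam_t \<gamma> t (q m)" for m
  define d where "d m = t * deriv \<gamma> (q m)" for m
  have qnn: "\<And>m. 0 \<le> q m" unfolding q_def using Mxnn by simp
  have curve: "(\<Sum>m<3. complex_of_real (c m) * W m) = 0"
  proof -
    have "(\<Sum>m<3. complex_of_real (c m) * W m) = Pt \<gamma> t w"
      unfolding Pt_sum W_def[symmetric]
    proof (rule sum.cong)
      fix m assume "m \<in> {..<3::nat}"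
      then have "Mx w m \<noteq> 0" using Mxpos by force
      then show "complex_of_real (c m) * W m = complex_of_real (Gt \<gamma> t ((cmod (W m))\<^sup>2) (Mx w m)) * W m"
        by (simp add: Gt_def c_def q_def)
    qed simp
    then show ?thesis using P0 unfolding w_def by simp
  qed
  define D where "D u = (\<Sum>m<3. complex_of_real (c m) * Uc k u m + W m * complex_of_real (d m *
      ((2 * Re (cnj (W m) * Uc k u m) * Mx w m - (cmod (W m))\<^sup>2 * (2 * Re (cnj (W (K m)) * Uc k u (K m))))
        / (Mx w m)\<^sup>2)))" for u
  have gd: "\<And>u. (\<gamma> has_real_derivative deriv \<gamma> u) (at u)" using gfacts(1)[OF cf e A2] .
  have Dd: "((\<lambda>y. Pbranch \<gamma> t s0 s1 s2 (chart k y)) has_derivative D) (at x)"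
  proof -
    have f: "(\<lambda>y. Pbranch \<gamma> t s0 s1 s2 (chart k y)) = (\<lambda>y. \<Sum>m<3. complex_of_real (Gt \<gamma> t ((cmod (Wc (chart k y) m))\<^sup>2)
         ((cmod (Wc (chart k y) (K m)))\<^sup>2)) * Wc (chart k y) m)"
      unfolding Pb_sum K_def ..
    have "((\<lambda>y. \<Sum>m<3. complex_of_real (Gt \<gamma> t ((cmod (Wc (chart k y) m))\<^sup>2)
         ((cmod (Wc (chart k y) (K m)))\<^sup>2)) * Wc (chart k y) m) has_derivative D) (at x)"
      unfolding D_def
    proof (rule has_derivative_sum)
      fix m assume "m \<in> {..<3::nat}"
      then have m: "m < 3" by simp
      have h0: "Wc (chart k x) (K m) \<noteq> 0" using actm[OF m] Mxpos[OF m] unfolding W_def w_def by auto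
      note td = term_deriv[OF gd Wc_chart_deriv[OF k m] Wc_chart_deriv[OF k conjunct1[OF Kp[OF m]]] h0, of t]
      have am: "(cmod (Wc (chart k x) (K m)))\<^sup>2 = Mx (chart k x) m" using actm[OF m] unfolding W_def w_def .
      show "((\<lambda>y. complex_of_real (Gt \<gamma> t ((cmod (Wc (chart k y) m))\<^sup>2) ((cmod (Wc (chart k y) (K m)))\<^sup>2)) * Wc (chart k y) m)
        has_derivative (\<lambda>u. complex_of_real (c m) * Uc k u m + W m * complex_of_real (d m *
      ((2 * Re (cnj (W m) * Uc k u m) * Mx w m - (cmod (W m))\<^sup>2 * (2 * Re (cnj (W (K m)) * Uc k u (K m))))
        / (Mx w m)\<^sup>2)))) (at x)"
        using td unfolding am W_def w_def c_def d_def q_def .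
    qed
    then show ?thesis unfolding f .
  qed
  note gf = gfacts[OF cf e A2]
  have c01: "\<And>m. 0 \<le> c m \<and> c m \<le> 1"
  proof -
    fix m
    have "0 \<le> \<gamma> (q m)" "\<gamma> (q m) \<le> 1" using gf(6)[OF qnn[of m]] by auto
    then have "t * \<gamma> (q m) \<le> t" "0 \<le> t * \<gamma> (q m)" using t mult_left_le[of "\<gamma> (q m)" t] by auto
    then show "0 \<le> c m \<and> c m \<le> 1" unfolding c_def gam_t_def using t by auto
  qed
  have qpos: "\<And>m. m < 3 \<Longrightarrow> W m \<noteq> 0 \<Longrightarrow> 0 < q m"
    unfolding q_def using Mxpos by simp
  have dnn: "\<And>m. m < 3 \<Longrightarrow> W m \<noteq> 0 \<Longrightarrow> 0 \<le> d m"
    unfolding d_def using gf(2) qpos t by simp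
  have cone: "\<And>m. m < 3 \<Longrightarrow> Mx w m \<le> (cmod (W m))\<^sup>2 \<Longrightarrow> c m = 1"
  proof -
    fix m :: nat assume m: "m < 3" and le: "Mx w m \<le> (cmod (W m))\<^sup>2"
    have "1 \<le> q m" unfolding q_def using le Mxpos[OF m] by simp
    moreover have "\<delta>\<^sup>2 \<le> 1" using \<delta> by (simp add: power_le_one)
    ultimately have "\<gamma> (q m) = 1" using gf(5)[of "q m"] unfolding \<delta>_def by simp
    then show "c m = 1" unfolding c_def gam_t_def by simp
  qed
  define nz where "nz m \<longleftrightarrow> d m \<noteq> 0 \<and> W m \<noteq> 0" for m
  have nzf: "\<And>m. m < 3 \<Longrightarrow> nz m \<Longrightarrow> (cmod (W m))\<^sup>2 < \<delta>\<^sup>2 * Mx w m \<and> 0 < c m"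
  proof -
    fix m :: nat assume m: "m < 3" and n: "nz m"
    have qp: "0 < q m" using qpos[OF m] n unfolding nz_def by simp
    have t0: "t \<noteq> 0" and dg: "deriv \<gamma> (q m) \<noteq> 0" using n unfolding nz_def d_def by auto
    have g1: "\<gamma> (q m) \<noteq> 1" using gf(4)[OF qp] dg by auto
    have g0: "\<gamma> (q m) \<noteq> 0" using gf(3)[OF qp] dg by auto
    have "q m < \<delta>\<^sup>2" using gf(5)[of "q m"] g1 unfolding \<delta>_def by force
    then have a: "(cmod (W m))\<^sup>2 < \<delta>\<^sup>2 * Mx w m" unfolding q_def using Mxpos[OF m] by (simp add: divide_less_eq)
    have "0 < \<gamma> (q m)" using gf(6)[OF qnn[of m]] g0 by auto
    then have "0 < t * \<gamma> (q m)" using t t0 by simp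
    then have "0 < c m" unfolding c_def gam_t_def using t by simp
    with a show "(cmod (W m))\<^sup>2 < \<delta>\<^sup>2 * Mx w m \<and> 0 < c m" by simp
  qed
  have excl: "\<And>i i'. i < 3 \<Longrightarrow> i' < 3 \<Longrightarrow> nz i \<Longrightarrow> nz i' \<Longrightarrow> i = i'"
  proof (rule ccontr)
    fix i i' :: nat assume i: "i < 3" "i' < 3" "nz i" "nz i'" "i \<noteq> i'"
    define j where "j = 3 - i - i'"
    have j: "j < 3" "j \<noteq> i" "j \<noteq> i'" using third[OF i(1) i(2) i(5)] j_def by auto
    have Mi: "Mx w i = max ((cmod (W i'))\<^sup>2) ((cmod (W j))\<^sup>2)"
      unfolding W_def using Mx_perm i j by metis
    have Mi': "Mx w i' = max ((cmod (W i))\<^sup>2) ((cmod (W j))\<^sup>2)"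
      unfolding W_def using Mx_perm i j by metis
    have Mj: "Mx w j = max ((cmod (W i))\<^sup>2) ((cmod (W i'))\<^sup>2)"
      unfolding W_def using Mx_perm i j by metis
    have ha: "(cmod (W i))\<^sup>2 < \<delta>\<^sup>2 * max ((cmod (W i'))\<^sup>2) ((cmod (W j))\<^sup>2)"
      using nzf[OF i(1) i(3)] Mi by simp
    have hb: "(cmod (W i'))\<^sup>2 < \<delta>\<^sup>2 * max ((cmod (W i))\<^sup>2) ((cmod (W j))\<^sup>2)"
      using nzf[OF i(2) i(4)] Mi' by simp
    have hc: "cmod (W j) \<le> cmod (W i) + cmod (W i')"
      if "(cmod (W i))\<^sup>2 \<le> (cmod (W j))\<^sup>2" "(cmod (W i'))\<^sup>2 \<le> (cmod (W j))\<^sup>2"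
    proof -
      have cj: "c j = 1" using cone[OF j(1)] Mj that by simp
      have "complex_of_real (c i) * W i + complex_of_real (c i') * W i' + complex_of_real (c j) * W j = 0"
        using curve sum3_perm[of i i' j "\<lambda>m. complex_of_real (c m) * W m"] i j by simp
      then have "W j = - (complex_of_real (c i) * W i + complex_of_real (c i') * W i')"
        using cj by (simp add: eq_neg_iff_add_eq_0 algebra_simps)
      then have "cmod (W j) \<le> cmod (complex_of_real (c i) * W i) + cmod (complex_of_real (c i') * W i')"
        by (simp only: norm_minus_cancel norm_triangle_ineq)
      also have "\<dots> \<le> cmod (W i) + cmod (W i')"
        using c01[of i] c01[of i'] by (intro add_mono) (auto simp: norm_mult intro: mult_left_le_one_le)
      finally show ?thesis .
    qed
    show False using two_small[OF \<delta> norm_ge_zero norm_ge_zero norm_ge_zero ha hb hc] by blast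
  qed
  define i where "i = (if \<exists>m<3. nz m then (SOME m. m < 3 \<and> nz m) else 0)"
  have i3: "i < 3" and oth: "\<And>m. m < 3 \<Longrightarrow> m \<noteq> i \<Longrightarrow> \<not> nz m"
  proof -
    have "i < 3 \<and> (\<forall>m. m < 3 \<longrightarrow> m \<noteq> i \<longrightarrow> \<not> nz m)"
    proof (cases "\<exists>m<3. nz m")
      case True
      then have "i < 3 \<and> nz i" unfolding i_def using someI_ex[of "\<lambda>m. m < 3 \<and> nz m"] by auto
      then show ?thesis using excl by blast
    next
      case False
      then show ?thesis unfolding i_def by auto
    qed
    then show "i < 3" "\<And>m. m < 3 \<Longrightarrow> m \<noteq> i \<Longrightarrow> \<not> nz m" by auto
  qed
  define kp where "kp = K i"
  have kp: "kp < 3" "kp \<noteq> i" using Kp[OF i3] unfolding kp_def by auto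
  define j where "j = 3 - i - kp"
  have j: "j < 3" "j \<noteq> i" "j \<noteq> kp" using third[OF i3 kp(1)] kp(2) unfolding j_def by auto
  have Mxi: "Mx w i = (cmod (W kp))\<^sup>2" using actm[OF i3] unfolding kp_def by simp
  have Mxi2: "Mx w i = max ((cmod (W kp))\<^sup>2) ((cmod (W j))\<^sup>2)"
    unfolding W_def using Mx_perm i3 kp j by metis
  have Mxkp: "Mx w kp = max ((cmod (W i))\<^sup>2) ((cmod (W j))\<^sup>2)"
    unfolding W_def using Mx_perm i3 kp j by metis
  have jle: "(cmod (W j))\<^sup>2 \<le> (cmod (W kp))\<^sup>2" using Mxi Mxi2 by (metis max.cobounded2)
  define e where "e = d i / (Mx w i)\<^sup>2"
  define X where "X = complex_of_real (e * (cmod (W kp))\<^sup>2 * (cmod (W i))\<^sup>2)"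
  define Y where "Y = complex_of_real (e * (cmod (W i))\<^sup>2) * W i * cnj (W kp)"
  define P where "P = complex_of_real (e * (cmod (W kp))\<^sup>2) * W i * W i"
  define R where "R = complex_of_real (e * (cmod (W i))\<^sup>2) * W i * W kp"
  define A where "A n = complex_of_real (c n) + (if n = i then X else 0) - (if n = kp then Y else 0)" for n
  define B where "B n = (if n = i then P else 0) - (if n = kp then R else 0)" for n
  have Ai: "A i = complex_of_real (c i) + X" and Akp: "A kp = complex_of_real (c kp) - Y"
    and Aj: "A j = complex_of_real (c j)"
    unfolding A_def using kp j by auto
  have Bi: "B i = P" and Bkp: "B kp = - R" and Bj: "B j = 0"
    unfolding B_def using kp j by auto
  have s3: "\<And>f. (\<Sum>m<3. f m) = f i + f kp + f j"
    using sum3_perm i3 kp j by metis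
  have ex0: "\<And>m. m < 3 \<Longrightarrow> m \<noteq> i \<Longrightarrow> W m * complex_of_real (d m *
      ((2 * Re (cnj (W m) * Uc k u m) * Mx w m - (cmod (W m))\<^sup>2 * (2 * Re (cnj (W (K m)) * Uc k u (K m))))
        / (Mx w m)\<^sup>2)) = 0" for u
    using oth unfolding nz_def by auto
  have DA: "D u = (\<Sum>n<3. A n * Uc k u n + B n * cnj (Uc k u n))" for u
  proof -
    have exi: "W i * complex_of_real (d i *
      ((2 * Re (cnj (W i) * Uc k u i) * Mx w i - (cmod (W i))\<^sup>2 * (2 * Re (cnj (W (K i)) * Uc k u (K i))))
        / (Mx w i)\<^sup>2)) = X * Uc k u i + P * cnj (Uc k u i) - Y * Uc k u kp - R * cnj (Uc k u kp)"
      unfolding kp_def[symmetric] X_def P_def Y_def R_def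
      by (rule ex_id[OF Mxi e_def])
    show ?thesis unfolding D_def s3 Ai Akp Aj Bi Bkp Bj exi ex0[OF kp(1) kp(2)] ex0[OF j(1) j(2)]
      by (simp add: algebra_simps)
  qed
  have Aw: "(\<Sum>n<3. A n * Wc (chart k x) n) = 0"
  proof -
    have c3: "complex_of_real (c i) * W i + complex_of_real (c kp) * W kp + complex_of_real (c j) * W j = 0"
      using curve unfolding s3 .
    have "X * W i - Y * W kp = 0"
      unfolding X_def Y_def by (simp only: of_real_mult cmod_sq_c) (simp add: algebra_simps)
    then show ?thesis using c3 unfolding s3 Ai Akp Aj W_def[symmetric] w_def[symmetric]
      by (simp add: algebra_simps)
  qed
  have Bw: "(\<Sum>n<3. B n * cnj (Wc (chart k x) n)) = 0"
  proof -
    have "P * cnj (W i) - R * cnj (W kp) = 0"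
      unfolding P_def R_def by (simp only: of_real_mult cmod_sq_c) (simp add: algebra_simps)
    then show ?thesis unfolding s3 Bi Bkp Bj W_def[symmetric] w_def[symmetric]
      by (simp add: algebra_simps)
  qed
  have diff: "(\<Sum>n<3. (cmod (A n))\<^sup>2) - (\<Sum>n<3. (cmod (B n))\<^sup>2) =
     (c i)\<^sup>2 + (c kp)\<^sup>2 + (c j)\<^sup>2 + 2 * e * (cmod (W i))\<^sup>2 * (c i * (cmod (W kp))\<^sup>2 - c kp * Re (W i * cnj (W kp)))"
    using core_id[of "c i" e "W kp" "W i" "c kp" "c j"]
    unfolding s3 Ai Akp Aj Bi Bkp Bj X_def Y_def P_def R_def by simp
  have sumc: "1 \<le> (c i)\<^sup>2 + (c kp)\<^sup>2 + (c j)\<^sup>2"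
  proof -
    have "\<exists>m<3. Mx w m \<le> (cmod (W m))\<^sup>2"
    proof -
      have M0: "Mx w 0 = max ((cmod (W 1))\<^sup>2) ((cmod (W 2))\<^sup>2)"
        and M1: "Mx w 1 = max ((cmod (W 0))\<^sup>2) ((cmod (W 2))\<^sup>2)"
        and M2: "Mx w 2 = max ((cmod (W 0))\<^sup>2) ((cmod (W 1))\<^sup>2)"
        unfolding Mx_def o1_def o2_def W_def by simp_all
      consider "(cmod (W 1))\<^sup>2 \<le> (cmod (W 0))\<^sup>2 \<and> (cmod (W 2))\<^sup>2 \<le> (cmod (W 0))\<^sup>2"
        | "(cmod (W 0))\<^sup>2 \<le> (cmod (W 1))\<^sup>2 \<and> (cmod (W 2))\<^sup>2 \<le> (cmod (W 1))\<^sup>2"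
        | "(cmod (W 0))\<^sup>2 \<le> (cmod (W 2))\<^sup>2 \<and> (cmod (W 1))\<^sup>2 \<le> (cmod (W 2))\<^sup>2"
        by linarith
      then show ?thesis
      proof cases
        case 1 then show ?thesis using M0 by (intro exI[of _ 0]) simp
      next
        case 2 then show ?thesis using M1 by (intro exI[of _ 1]) simp
      next
        case 3 then show ?thesis using M2 by (intro exI[of _ 2]) simp
      qed
    qed
    then obtain m where m: "m < 3" "Mx w m \<le> (cmod (W m))\<^sup>2" by blast
    have cm: "c m = 1" using cone[OF m] .
    have "m = i \<or> m = kp \<or> m = j" using in3[OF i3 kp(1) j(1) kp(2)[symmetric] j(2)[symmetric] j(3)[symmetric] m(1)] .
    then show ?thesis using cm by (auto simp: add_nonneg_nonneg)
  qed
  have brk: "0 \<le> e * (cmod (W i))\<^sup>2 * (c i * (cmod (W kp))\<^sup>2 - c kp * Re (W i * cnj (W kp)))"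
  proof (cases "nz i")
    case False
    then have "e = 0 \<or> W i = 0" unfolding nz_def e_def by auto
    then show ?thesis by auto
  next
    case True
    have Wi0: "W i \<noteq> 0" using True unfolding nz_def by simp
    have e0: "0 \<le> e" unfolding e_def using dnn[OF i3 Wi0] by simp
    have f: "(cmod (W i))\<^sup>2 < \<delta>\<^sup>2 * Mx w i" "0 < c i" using nzf[OF i3 True] by auto
    have "\<delta>\<^sup>2 * Mx w i \<le> Mx w i"
      using mult_right_mono[of "\<delta>\<^sup>2" 1 "Mx w i"] Mxnn \<delta> by (simp add: power_le_one)
    then have "(cmod (W i))\<^sup>2 \<le> (cmod (W kp))\<^sup>2" using f(1) Mxi by linarith
    then have ckp: "c kp = 1" using cone[OF kp(1)] Mxkp jle by simp
    have c3: "complex_of_real (c i) * W i + W kp + complex_of_real (c j) * W j = 0"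
      using curve ckp unfolding s3 by simp
    have jle': "cmod (W j) \<le> cmod (W kp)" using power2_le_imp_le[OF jle norm_ge_zero] .
    have re: "Re (W i * cnj (W kp)) \<le> 0"
      using re_nonpos[OF c3 _ _ jle' f(2)] c01[of j] by simp
    have "0 \<le> c i * (cmod (W kp))\<^sup>2 - c kp * Re (W i * cnj (W kp))"
    proof -
      have "0 \<le> c i * (cmod (W kp))\<^sup>2" using f(2) by simp
      then show ?thesis unfolding ckp mult_1_left using re by linarith
    qed
    then show ?thesis using e0 by simp
  qed
  have Dl: "(\<Sum>n<3. (cmod (A n))\<^sup>2) \<noteq> (\<Sum>n<3. (cmod (B n))\<^sup>2)"
  proof -
    have "0 < (\<Sum>n<3. (cmod (A n))\<^sup>2) - (\<Sum>n<3. (cmod (B n))\<^sup>2)"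
      unfolding diff using sumc brk by (simp add: mult.assoc)
    then show ?thesis by simp
  qed
  have "surj D \<and> nondeg_on x {v. D v = 0}"
    by (rule L1h[OF k DA Aw Bw Dl])
  then show ?thesis using Dd by blast
qed

theorem proposition5p1:
  fixes A1 A2 :: real
  assumes "1 < A1" and "A1 < A2"
  shows "\<exists>\<epsilon>0>0. \<forall>\<epsilon>. 0 < \<epsilon> \<and> \<epsilon> < \<epsilon>0 \<longrightarrow>
           (\<forall>\<gamma>. cutoff A1 A2 \<epsilon> \<gamma> \<longrightarrow>
              (\<forall>t\<in>{0..1}. \<forall>k\<in>{0, 1, 2::nat}. symplectic_curve_chart \<gamma> t k))"
proof -
  have A2: "0 < A2" using assms by simp
  show ?thesis
  proof (intro exI[of _ "1 / (2 * A2)"] conjI allI impI ballI)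
    show "0 < 1 / (2 * A2)" using A2 by simp
    fix \<epsilon> t :: real and \<gamma> :: "real \<Rightarrow> real" and k :: nat
    assume e: "0 < \<epsilon> \<and> \<epsilon> < 1 / (2 * A2)" and cf: "cutoff A1 A2 \<epsilon> \<gamma>"
      and t: "t \<in> {0..1}" and k: "k \<in> {0, 1, 2}"
    have es: "A2 * \<epsilon> < 1/2"
    proof -
      have "A2 * \<epsilon> < A2 * (1 / (2 * A2))" using e A2 by (intro mult_strict_left_mono) auto
      also have "\<dots> = 1/2" using A2 by simp
      finally show ?thesis .
    qed
    have k3: "k < 3" using k by auto
    show "symplectic_curve_chart \<gamma> t k"
      unfolding symplectic_curve_chart_def
      using point_ok[OF cf _ A2 es _ _ k3] e t by auto
  qed
qed

end
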